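(* Let $f$ be a modulus function, $\beta\in(0,1]$, $m\ge0$ an integer, $\theta=(k_r)$ a lacunary sequence, and $p=(p_k)$ a sequence of positive reals with $0<h=\inf_kp_k\le p_k\le\sup_kp_k=H<\infty$ such that $\lim_kp_k$ exists and is $>0$. If a sequence $X=(X_k)$ of fuzzy numbers satisfies $\lim_r\frac{1}{h_r^\beta}\sum_{k\in I_r}[f(d(\Delta^mX_k,X'))]^{p_k}=0$ and $\lim_r\frac{1}{h_r^\beta}\sum_{k\in I_r}[f(d(\Delta^mX_k,X''))]^{p_k}=0$ for fuzzy numbers $X',X''$, then $X'=X''$; i.e., the $w_p^\beta(\theta,f,F,\Delta^m)$-limit is unique.
   Context: A fuzzy number is a map $X:\mathbb{R}\to[0,1]$ which is normal, fuzzy convex, upper semicontinuous, with compact closure of $\{t:X(t)>0\}$; $L(\mathbb{R})$ is the set of fuzzy numbers. Level sets $[X]^\alpha=\{t:X(t)\ge\alpha\}$ ($\alpha\in(0,1]$), $[X]^0=\overline{\{t:X(t)>0\}}$, are compact intervals $[u^\alpha,v^\alpha]$. Subtraction: $[X-Y]^\alpha=[u_1^\alpha-v_2^\alpha,v_1^\alpha-u_2^\alpha]$. Metric: $d(X,Y)=\sup_{\alpha\in[0,1]}\max\{|u_1^\alpha-u_2^\alpha|,|v_1^\alpha-v_2^\alpha|\}$. $(\Delta^0X)_k=X_k$, $(\Delta^1X)_k=X_k-X_{k+1}$, $(\Delta^mX)_k=(\Delta^1(\Delta^{m-1}X))_k$. A lacunary sequence is an increasing integer sequence $\theta=(k_r)_{r\ge0}$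 with $k_0=0$, $h_r=k_r-k_{r-1}\to\infty$; $I_r=(k_{r-1},k_r]$. A modulus function is $f:[0,\infty)\to[0,\infty)$ with $f(x)=0$ iff $x=0$, $f(x+y)\le f(x)+f(y)$, $f$ increasing, and $f$ right-continuous at $0$. *)

theory Defs
  imports "HOL-Analysis.Analysis"
begin

type_synonym fuzzy = "real \<Rightarrow> real"

definition fuzzy_number :: "fuzzy \<Rightarrow> bool" where
  "fuzzy_number X \<longleftrightarrow>
     (\<forall>t. 0 \<le> X t \<and> X t \<le> 1) \<and>
     (\<exists>t. X t = 1) \<and>
     (\<forall>s t (l::real). 0 \<le> l \<and> l \<le> 1 \<longrightarrow> X (l * s + (1 - l) * t) \<ge> min (X s) (X t)) \<and>
     (\<forall>a. open {t. X t < a}) \<and>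
     compact (closure {t. X t > 0})"

definition level :: "fuzzy \<Rightarrow> real \<Rightarrow> real set" where
  "level X a = (if a > 0 then {t. X t \<ge> a} else closure {t. X t > 0})"

definition lo :: "fuzzy \<Rightarrow> real \<Rightarrow> real" where
  "lo X a = Inf (level X a)"

definition hi :: "fuzzy \<Rightarrow> real \<Rightarrow> real" where
  "hi X a = Sup (level X a)"

text \<open>Subtraction: the fuzzy number whose a-level set is [lo X a - hi Y a, hi X a - lo Y a].\<close>
definition fsub :: "fuzzy \<Rightarrow> fuzzy \<Rightarrow> fuzzy" where
  "fsub X Y = (\<lambda>t. Sup ({0} \<union> {a \<in> {0<..1}. lo X a - hi Y a \<le> t \<and> t \<le> hi X a - lo Y a}))"

definition fdist :: "fuzzy \<Rightarrow> fuzzy \<Rightarrow> real" where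
  "fdist X Y = (SUP a\<in>{0..1}. max \<bar>lo X a - lo Y a\<bar> \<bar>hi X a - hi Y a\<bar>)"

fun fdelta :: "nat \<Rightarrow> (nat \<Rightarrow> fuzzy) \<Rightarrow> nat \<Rightarrow> fuzzy" where
  "fdelta 0 X k = X k"
| "fdelta (Suc m) X k = fsub (fdelta m X k) (fdelta m X (Suc k))"

definition lacunary :: "(nat \<Rightarrow> nat) \<Rightarrow> bool" where
  "lacunary th \<longleftrightarrow> strict_mono th \<and> th 0 = 0 \<and>
     filterlim (\<lambda>r. real (th (Suc r) - th r)) at_top sequentially"

definition modulus :: "(real \<Rightarrow> real) \<Rightarrow> bool" where
  "modulus f \<longleftrightarrow>
     (\<forall>x\<ge>0. f x \<ge> 0) \<and>
     (\<forall>x\<ge>0. f x = 0 \<longleftrightarrow> x = 0) \<and>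
     (\<forall>x\<ge>0. \<forall>y\<ge>0. f (x + y) \<le> f x + f y) \<and>
     mono_on {0..} f \<and>
     (f \<longlongrightarrow> 0) (at_right 0)"

text \<open>(1/h_r^beta) * sum over I_r of f(d(Delta^m X_k, L))^(p_k), with r shifted by one (r >= 1).\<close>
definition wsum :: "(real \<Rightarrow> real) \<Rightarrow> real \<Rightarrow> nat \<Rightarrow> (nat \<Rightarrow> nat) \<Rightarrow> (nat \<Rightarrow> real)
    \<Rightarrow> (nat \<Rightarrow> fuzzy) \<Rightarrow> fuzzy \<Rightarrow> nat \<Rightarrow> real" where
  "wsum f \<beta> m th p X L r =
     (1 / (real (th (Suc r) - th r)) powr \<beta>) *
     (\<Sum>k\<in>{th r<..th (Suc r)}. (f (fdist (fdelta m X k) L)) powr (p k))"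

end

theory Submission imports Defs begin

definition G :: "fuzzy \<Rightarrow> bool" where "G Z \<longleftrightarrow> (\<exists>M. \<forall>t. Z t > 0 \<longrightarrow> \<bar>t\<bar> \<le> M)"
definition Qb :: "fuzzy \<Rightarrow> bool" where "Qb Z \<longleftrightarrow> (\<exists>M. \<forall>a. \<bar>lo Z a\<bar> \<le> M \<and> \<bar>hi Z a\<bar> \<le> M)"

lemma inf_bound:
  fixes S :: "real set"
  assumes "S \<subseteq> {-M..M}"
  shows "\<bar>Inf S\<bar> \<le> max M (max \<bar>Inf {}\<bar> \<bar>Sup ({}::real set)\<bar>)
       \<and> \<bar>Sup S\<bar> \<le> max M (max \<bar>Inf {}\<bar> \<bar>Sup ({}::real set)\<bar>)"
proof (cases "S = {}")
  case True then show ?thesis by (simp add: le_max_iff_disj)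
next
  case False
  then obtain x where x: "x \<in> S" by auto
  have bb: "bdd_below S" "bdd_above S" by (rule bdd_below_mono[OF bdd_below_Icc assms], rule bdd_above_mono[OF bdd_above_Icc assms])
  have "Inf S \<le> x" using x bb by (auto intro: cInf_lower)
  moreover have "-M \<le> Inf S" using False assms by (auto intro!: cInf_greatest)
  moreover have "x \<le> Sup S" using x bb by (auto intro: cSup_upper)
  moreover have "Sup S \<le> M" using False assms by (auto intro!: cSup_least)
  moreover have "x \<le> M" "-M \<le> x" using x assms by auto
  ultimately have "\<bar>Inf S\<bar> \<le> M" "\<bar>Sup S\<bar> \<le> M" by (simp_all add: abs_le_iff)
  then show ?thesis by linarith
qed

lemma G_Qb: assumes "G Z" shows "Qb Z"
proof -
  obtain M where M: "\<And>t. Z t > 0 \<Longrightarrow> \<bar>t\<bar> \<le> M" using assms unfolding G_def by auto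
  have sub: "level Z a \<subseteq> {-M..M}" for a
  proof (cases "a > 0")
    case True
    have "{t. a \<le> Z t} \<subseteq> {-M..M}"
    proof
      fix t assume "t \<in> {t. a \<le> Z t}"
      then have "\<bar>t\<bar> \<le> M" using M True by auto
      then show "t \<in> {-M..M}" by (simp add: abs_le_iff)
    qed
    then show ?thesis unfolding level_def using True by simp
  next
    case False
    have "{t. Z t > 0} \<subseteq> {-M..M}"
    proof
      fix t assume "t \<in> {t. Z t > 0}"
      then have "\<bar>t\<bar> \<le> M" using M by auto
      then show "t \<in> {-M..M}" by (simp add: abs_le_iff)
    qed
    then have "closure {t. Z t > 0} \<subseteq> closure {-M..M}" by (rule closure_mono)
    then show ?thesis unfolding level_def using False by simp
  qed
  show ?thesis unfolding Qb_def lo_def hi_def using inf_bound[OF sub] by blast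
qed

lemma fsub_G: assumes "Qb Z" "Qb W" shows "G (fsub Z W)"
proof -
  obtain M1 where M1: "\<And>a. \<bar>lo Z a\<bar> \<le> M1 \<and> \<bar>hi Z a\<bar> \<le> M1" using assms(1) unfolding Qb_def by auto
  obtain M2 where M2: "\<And>a. \<bar>lo W a\<bar> \<le> M2 \<and> \<bar>hi W a\<bar> \<le> M2" using assms(2) unfolding Qb_def by auto
  have "fsub Z W t \<le> 0" if t: "\<bar>t\<bar> > M1 + M2" for t
  proof -
    have "{a \<in> {0<..1}. lo Z a - hi W a \<le> t \<and> t \<le> hi Z a - lo W a} = {}"
    proof (rule ccontr)
      assume "\<not> ?thesis"
      then obtain a where "lo Z a - hi W a \<le> t" "t \<le> hi Z a - lo W a" by auto
      with M1[of a] M2[of a] t show False by (auto simp: abs_le_iff)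
    qed
    then have "fsub Z W t = Sup {0}" unfolding fsub_def by (simp only: Un_empty_right)
    then show ?thesis by simp
  qed
  then show ?thesis unfolding G_def by (metis not_le)
qed

lemma fuzzy_parts:
  assumes "fuzzy_number X"
  shows "\<And>t. 0 \<le> X t" "\<And>t. X t \<le> 1" "\<exists>t. X t = 1"
    "\<And>s t l. 0 \<le> l \<Longrightarrow> l \<le> 1 \<Longrightarrow> X (l * s + (1 - l) * t) \<ge> min (X s) (X t)"
    "\<And>a. open {t. X t < a}" "compact (closure {t. X t > 0})"
  using assms unfolding fuzzy_number_def by meson+

lemma fuzzy_G: assumes "fuzzy_number Z" shows "G Z"
proof -
  have "bounded (closure {t. Z t > 0})" by (rule compact_imp_bounded[OF fuzzy_parts(6)[OF assms]])
  then obtain M where M: "\<forall>x\<in>closure {t. Z t > 0}. \<bar>x\<bar> \<le> M" unfolding bounded_real by (elim exE)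
  have "\<forall>t. Z t > 0 \<longrightarrow> \<bar>t\<bar> \<le> M"
  proof (intro allI impI)
    fix t assume "Z t > 0"
    then have "t \<in> {t. Z t > 0}" by simp
    then have "t \<in> closure {t. Z t > 0}" by (rule subsetD[OF closure_subset])
    then show "\<bar>t\<bar> \<le> M" using M by blast
  qed
  then show ?thesis unfolding G_def by blast
qed
lemma fdelta_G: assumes "\<forall>k. G (X k)" shows "G (fdelta m X k)"
proof (induction m arbitrary: k)
  case 0 then show ?case using assms by simp
next
  case (Suc m) then show ?case by (simp add: fsub_G G_Qb)
qed

lemma fdist_props:
  assumes "Qb A" "Qb B"
  shows "bdd_above ((\<lambda>a. max \<bar>lo A a - lo B a\<bar> \<bar>hi A a - hi B a\<bar>) ` {0..1})"
    and "\<And>a. a \<in> {0..1} \<Longrightarrow> max \<bar>lo A a - lo B a\<bar> \<bar>hi A a - hi B a\<bar> \<le> fdist A B"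
    and "0 \<le> fdist A B"
proof -
  obtain M1 where M1: "\<And>a. \<bar>lo A a\<bar> \<le> M1 \<and> \<bar>hi A a\<bar> \<le> M1" using assms(1) unfolding Qb_def by auto
  obtain M2 where M2: "\<And>a. \<bar>lo B a\<bar> \<le> M2 \<and> \<bar>hi B a\<bar> \<le> M2" using assms(2) unfolding Qb_def by auto
  have "max \<bar>lo A a - lo B a\<bar> \<bar>hi A a - hi B a\<bar> \<le> M1 + M2" for a
    using M1[of a] M2[of a] by (simp add: abs_le_iff)
  then show bd: "bdd_above ((\<lambda>a. max \<bar>lo A a - lo B a\<bar> \<bar>hi A a - hi B a\<bar>) ` {0..1})"
    by (intro bdd_aboveI2) 
  show le: "max \<bar>lo A a - lo B a\<bar> \<bar>hi A a - hi B a\<bar> \<le> fdist A B" if "a \<in> {0..1}" for a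
    unfolding fdist_def by (rule cSUP_upper[OF that bd])
  have "0 \<le> max \<bar>lo A 0 - lo B 0\<bar> \<bar>hi A 0 - hi B 0\<bar>" by simp
  also have "\<dots> \<le> fdist A B" by (rule le) simp
  finally show "0 \<le> fdist A B" .
qed

lemma maxtri:
  fixes a1 a2 b1 b2 c1 c2 :: real
  shows "max \<bar>b1 - c1\<bar> \<bar>b2 - c2\<bar> \<le> max \<bar>a1 - b1\<bar> \<bar>a2 - b2\<bar> + max \<bar>a1 - c1\<bar> \<bar>a2 - c2\<bar>"
proof -
  have "\<bar>b1 - c1\<bar> \<le> \<bar>a1 - b1\<bar> + \<bar>a1 - c1\<bar>" "\<bar>b2 - c2\<bar> \<le> \<bar>a2 - b2\<bar> + \<bar>a2 - c2\<bar>" by arith+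
  moreover have "\<bar>a1 - b1\<bar> \<le> max \<bar>a1 - b1\<bar> \<bar>a2 - b2\<bar>" "\<bar>a2 - b2\<bar> \<le> max \<bar>a1 - b1\<bar> \<bar>a2 - b2\<bar>"
    "\<bar>a1 - c1\<bar> \<le> max \<bar>a1 - c1\<bar> \<bar>a2 - c2\<bar>" "\<bar>a2 - c2\<bar> \<le> max \<bar>a1 - c1\<bar> \<bar>a2 - c2\<bar>" by simp_all
  ultimately show ?thesis by (simp only: max.bounded_iff) linarith
qed

lemma fdist_tri:
  assumes "Qb A" "Qb B" "Qb C"
  shows "fdist B C \<le> fdist A B + fdist A C"
  unfolding fdist_def[of B C]
proof (rule cSUP_least)
  show "{0..1::real} \<noteq> {}" by simp
  fix a :: real assume a: "a \<in> {0..1}"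
  have "max \<bar>lo B a - lo C a\<bar> \<bar>hi B a - hi C a\<bar> \<le>
        max \<bar>lo A a - lo B a\<bar> \<bar>hi A a - hi B a\<bar> + max \<bar>lo A a - lo C a\<bar> \<bar>hi A a - hi C a\<bar>"
    by (rule maxtri)
  also have "\<dots> \<le> fdist A B + fdist A C"
    using fdist_props(2)[OF assms(1,2) a] fdist_props(2)[OF assms(1,3) a] by linarith
  finally show "max \<bar>lo B a - lo C a\<bar> \<bar>hi B a - hi C a\<bar> \<le> fdist A B + fdist A C" .
qed

lemma comb_lemma:
  fixes u v t l :: real
  assumes h: "(v - u) * l = v - t" and "u < v"
  shows "l * u + (1 - l) * v = t"
proof -
  have "(v - u) * (l * u + (1 - l) * v) = ((v - u) * l) * u + ((v - u) - (v - u) * l) * v"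
    by (simp add: algebra_simps)
  also have "\<dots> = (v - u) * t" unfolding h by (simp add: algebra_simps)
  finally show ?thesis using assms(2) by simp
qed

lemma level_char:
  assumes X: "fuzzy_number X" and a: "0 < a" "a \<le> 1"
  shows "a \<le> X t \<longleftrightarrow> lo X a \<le> t \<and> t \<le> hi X a"
proof -
  define S where "S = {t. a \<le> X t}"
  have lv: "level X a = S" unfolding level_def S_def using a by simp
  have "S = - {t. X t < a}" unfolding S_def by auto
  then have cl: "closed S" using fuzzy_parts(5)[OF X] by (simp add: closed_def)
  have "S \<subseteq> closure {t. X t > 0}"
  proof
    fix x assume "x \<in> S"
    then have "x \<in> {t. X t > 0}" unfolding S_def using a by simp
    then show "x \<in> closure {t. X t > 0}" by (rule subsetD[OF closure_subset])
  qed
  moreover have "bounded (closure {t. X t > 0})" by (rule compact_imp_bounded[OF fuzzy_parts(6)[OF X]])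
  ultimately have bS: "bounded S" by (rule bounded_subset[rotated])
  have bb: "bdd_below S" "bdd_above S" using bS by (simp_all add: bounded_imp_bdd_below bounded_imp_bdd_above)
  obtain t1 where "X t1 = 1" using fuzzy_parts(3)[OF X] by blast
  then have "t1 \<in> S" unfolding S_def using a by simp
  then have ne: "S \<noteq> {}" by blast
  have loS: "lo X a \<in> S" unfolding lo_def lv by (rule closed_contains_Inf[OF ne bb(1) cl])
  have hiS: "hi X a \<in> S" unfolding hi_def lv by (rule closed_contains_Sup[OF ne bb(2) cl])
  show ?thesis
  proof
    assume "a \<le> X t"
    then have "t \<in> S" unfolding S_def by simp
    then show "lo X a \<le> t \<and> t \<le> hi X a" unfolding lo_def hi_def lv
      using bb by (simp add: cInf_lower cSup_upper)
  next
    assume t: "lo X a \<le> t \<and> t \<le> hi X a"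
    show "a \<le> X t"
    proof (cases "lo X a = hi X a")
      case True
      then have "t = lo X a" using t by simp
      then show ?thesis using loS unfolding S_def by simp
    next
      case False
      then have lt: "lo X a < hi X a" using t by simp
      define l where "l = (hi X a - t) / (hi X a - lo X a)"
      have l01: "0 \<le> l" "l \<le> 1" unfolding l_def using t lt by (auto simp: field_simps)
      have "(hi X a - lo X a) * l = hi X a - t" unfolding l_def using lt by simp
      then have "l * lo X a + (1 - l) * hi X a = t" using lt by (rule comb_lemma)
      then have "X t \<ge> min (X (lo X a)) (X (hi X a))"
        using fuzzy_parts(4)[OF X l01] by metis
      moreover have "a \<le> X (lo X a)" "a \<le> X (hi X a)" using loS hiS unfolding S_def by auto
      ultimately show ?thesis by linarith
    qed
  qed
qed

lemma fdist0_eq: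
  assumes X: "fuzzy_number X" and Y: "fuzzy_number Y" and d: "fdist X Y \<le> 0"
  shows "X = Y"
proof
  fix t
  have QX: "Qb X" and QY: "Qb Y" using fuzzy_G G_Qb X Y by blast+
  have eqs: "lo X a = lo Y a \<and> hi X a = hi Y a" if "a \<in> {0..1}" for a
    using fdist_props(2)[OF QX QY that] d by linarith
  have iff: "a \<le> X t \<longleftrightarrow> a \<le> Y t" if "0 < a" "a \<le> 1" for a
    using level_char[OF X that, of t] level_char[OF Y that, of t] eqs[of a] that by simp
  show "X t = Y t"
  proof (rule ccontr)
    assume ne: "X t \<noteq> Y t"
    show False
    proof (cases "X t < Y t")
      case True
      have "0 < Y t" using True fuzzy_parts(1)[OF X, of t] by linarith
      then show False using iff[of "Y t"] fuzzy_parts(2)[OF Y, of t] True by simp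
    next
      case False
      then have lt: "Y t < X t" using ne by simp
      have "0 < X t" using lt fuzzy_parts(1)[OF Y, of t] by linarith
      then show False using iff[of "X t"] fuzzy_parts(2)[OF X, of t] lt by simp
    qed
  qed
qed

theorem theorem3p4:
  fixes f :: "real \<Rightarrow> real" and \<beta> :: real and m :: nat and th :: "nat \<Rightarrow> nat"
    and p :: "nat \<Rightarrow> real" and X :: "nat \<Rightarrow> fuzzy" and X' X'' :: fuzzy
  assumes "modulus f"
    and "0 < \<beta>" and "\<beta> \<le> 1"
    and "lacunary th"
    and "\<forall>k. p k > 0"
    and "(INF k. p k) > 0" and "bdd_above (range p)"
    and "convergent p" and "lim p > 0"
    and "\<forall>k. fuzzy_number (X k)"
    and "fuzzy_number X'" and "fuzzy_number X''"
    and "wsum f \<beta> m th p X X' \<longlonglongrightarrow> 0"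
    and "wsum f \<beta> m th p X X'' \<longlonglongrightarrow> 0"
  shows "X' = X''"
proof -
  note mod = assms(1)[unfolded modulus_def]
  have fnn: "\<And>x. 0 \<le> x \<Longrightarrow> 0 \<le> f x" using mod by blast
  have fz: "\<And>x. 0 \<le> x \<Longrightarrow> f x = 0 \<longleftrightarrow> x = 0" using mod by blast
  have fsa: "\<And>x y. 0 \<le> x \<Longrightarrow> 0 \<le> y \<Longrightarrow> f (x + y) \<le> f x + f y" using mod by blast
  have fmono: "mono_on {0..} f" using mod by blast
  have QX1: "Qb X'" by (rule G_Qb[OF fuzzy_G[OF assms(11)]])
  have QX2: "Qb X''" by (rule G_Qb[OF fuzzy_G[OF assms(12)]])
  have GX: "\<forall>k. G (X k)" using assms(10) fuzzy_G by blast
  have QA: "\<And>k. Qb (fdelta m X k)" using fdelta_G[OF GX] G_Qb by blast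
  define d where "d = fdist X' X''"
  have d0: "0 \<le> d" unfolding d_def by (rule fdist_props(3)[OF QX1 QX2])
  show ?thesis
  proof (rule ccontr)
    assume neq: "X' \<noteq> X''"
    have dpos: "0 < d"
    proof (rule ccontr)
      assume "\<not> 0 < d"
      then have "fdist X' X'' \<le> 0" unfolding d_def by simp
      then show False using fdist0_eq[OF assms(11,12)] neq by blast
    qed
    define c where "c = f d / 2"
    have fdpos: "0 < f d" using fnn[OF d0] fz[OF d0] dpos by linarith
    then have cpos: "0 < c" unfolding c_def by simp
    define h0 where "h0 = (INF k. p k)"
    have bb: "bdd_below (range p)" by (rule bdd_belowI2[of _ 0]) (use assms(5) in \<open>auto intro: less_imp_le\<close>)
    have ph: "\<And>k. h0 \<le> p k" unfolding h0_def using cINF_lower[OF bb] by blast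
    obtain H where pH: "\<And>k. p k \<le> H" using assms(7) unfolding bdd_above_def by blast
    define e where "e = min (c powr h0) (c powr H)"
    have epos: "0 < e" unfolding e_def using cpos by simp
    have ce: "e \<le> c powr p k" for k
    proof (cases "1 \<le> c")
      case True
      then have "c powr h0 \<le> c powr p k" by (rule powr_mono[OF ph])
      then show ?thesis unfolding e_def by linarith
    next
      case False
      then have "c powr H \<le> c powr p k" using cpos by (intro powr_mono'[OF pH]) simp_all
      then show ?thesis unfolding e_def by linarith
    qed
    define T where "T k = f (fdist (fdelta m X k) X') powr p k + f (fdist (fdelta m X k) X'') powr p k" for k
    have Te: "e \<le> T k" for k
    proof -
      define a where "a = fdist (fdelta m X k) X'"
      define b where "b = fdist (fdelta m X k) X''"
      have a0: "0 \<le> a" unfolding a_def by (rule fdist_props(3)[OF QA QX1])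
      have b0: "0 \<le> b" unfolding b_def by (rule fdist_props(3)[OF QA QX2])
      have "d \<le> a + b" unfolding d_def a_def b_def by (rule fdist_tri[OF QA QX1 QX2])
      then have "f d \<le> f (a + b)" using fmono d0 a0 b0 by (intro mono_onD[OF fmono]) auto
      also have "\<dots> \<le> f a + f b" by (rule fsa[OF a0 b0])
      finally have "c \<le> f a \<or> c \<le> f b" unfolding c_def by linarith
      moreover have "0 \<le> f a powr p k" "0 \<le> f b powr p k" by simp_all
      moreover have "c \<le> f a \<Longrightarrow> c powr p k \<le> f a powr p k"
        using cpos assms(5) by (intro powr_mono2) (auto simp: less_imp_le)
      moreover have "c \<le> f b \<Longrightarrow> c powr p k \<le> f b powr p k"
        using cpos assms(5) by (intro powr_mono2) (auto simp: less_imp_le)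
      ultimately have "c powr p k \<le> T k" unfolding T_def a_def b_def by linarith
      then show ?thesis using ce[of k] by linarith
    qed
    define g where "g r = wsum f \<beta> m th p X X' r + wsum f \<beta> m th p X X'' r" for r
    have glim: "g \<longlonglongrightarrow> 0" unfolding g_def using tendsto_add[OF assms(13,14)] by simp
    have sm: "strict_mono th" using assms(4) unfolding lacunary_def by blast
    have ge: "e \<le> g r" for r
    proof -
      define hr where "hr = real (th (Suc r) - th r)"
      have "th r < th (Suc r)" using sm by (simp add: strict_mono_less)
      then have hr1: "1 \<le> hr" unfolding hr_def by simp
      have hb: "hr powr \<beta> \<le> hr" using powr_mono[OF assms(3) hr1] using hr1 by simp
      have hbpos: "0 < hr powr \<beta>" using hr1 by simp
      have gr: "g r = (1 / hr powr \<beta>) * (\<Sum>k\<in>{th r<..th (Suc r)}. T k)"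
        unfolding g_def wsum_def T_def hr_def by (simp add: sum.distrib distrib_left)
      have "hr * e \<le> (\<Sum>k\<in>{th r<..th (Suc r)}. T k)"
        using sum_bounded_below[of "{th r<..th (Suc r)}" e T] Te unfolding hr_def by simp
      moreover have "hr powr \<beta> * e \<le> hr * e" using hb epos by simp
      ultimately have "hr powr \<beta> * e \<le> (\<Sum>k\<in>{th r<..th (Suc r)}. T k)" by linarith
      then show ?thesis unfolding gr using hbpos by (simp add: field_simps)
    qed
    have "e \<le> 0" by (rule LIMSEQ_le_const[OF glim]) (use ge in blast)
    then show False using epos by simp
  qed
qed

end
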